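(* Let $\mu_n>0$ satisfy $\mu_n\to0$ and $n^{1/2}\mu_n\to\mathfrak m$ with $0\le\mathfrak m\le\infty$, and let $t\in\mathbb R$. Then every consistent estimator $\hat F_n(t)$ of $F_{A,n,\theta}(t)$ satisfies $$\lim_{n\to\infty}\sup_{|\theta|<c/n^{1/2}}P_{n,\theta}\big(|\hat F_n(t)-F_{A,n,\theta}(t)|>\varepsilon\big)=1$$ for each $\varepsilon<(\Phi(t+\mathfrak m)-\Phi(t-\mathfrak m))/2$ and each $c>|t|$ (with $\Phi(\pm\infty)$ interpreted as $1$, $0$). In particular, no uniformly consistent estimator of $F_{A,n,\theta}(t)$ exists.
   Context: Gaussian location model: for each sample size $n$, $y_1,\dots,y_n$ are i.i.d. $N(\theta,1)$ with $\theta\in\mathbb R$ unknown; $\bar y$ is their mean. $P_{n,\theta}$ denotes the probability governing a sample of size $n$ when $\theta$ is the true parameter. Given a nonrandom tuning parameter $\mu_n>0$, the adaptive LASSO estimator is $\hat\theta_A=0$ if $|\bar y|\le\mu_n$ and $\hat\theta_A=\bar y-\mu_n^2/\bar y$ if $|\bar y|>\mu_n$. $F_{A,n,\theta}$ denotes the cdf of $n^{1/2}(\hat\theta_A-\theta)$ under $P_{n,\theta}$. An estimator $\hat F_n(t)$ is any (possibly randomized) measurable function of the data $y_1,\dots,y_n$ (and of an independent randomization); it is consistent if for every $\theta\in\mathbb R$ and every $\eta>0$, $P_{n,\theta}(|\hat F_n(t)-F_{A,n,\theta}(t)|>\eta)\to0$. $\Phi$ is the standard normal cdf. *)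

theory Defs
  imports "HOL-Probability.Probability"
begin

definition Phi :: "real \<Rightarrow> real" where
  "Phi x = measure (density lborel std_normal_density) {..x}"

fun Phi_ext :: "ereal \<Rightarrow> real" where
  "Phi_ext (ereal x) = Phi x"
| "Phi_ext PInfty = 1"
| "Phi_ext MInfty = 0"

definition ybar :: "nat \<Rightarrow> (nat \<Rightarrow> real) \<Rightarrow> real" where
  "ybar n y = (\<Sum>i<n. y i) / real n"

definition sample :: "nat \<Rightarrow> real \<Rightarrow> (nat \<Rightarrow> real) measure" where
  "sample n \<theta> = PiM {..<n} (\<lambda>_. density lborel (normal_density \<theta> 1))"

definition thetaA :: "(nat \<Rightarrow> real) \<Rightarrow> nat \<Rightarrow> (nat \<Rightarrow> real) \<Rightarrow> real" where
  "thetaA mu n y = (if \<bar>ybar n y\<bar> \<le> mu n then 0 else ybar n y - (mu n)\<^sup>2 / ybar n y)"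

definition FA :: "(nat \<Rightarrow> real) \<Rightarrow> nat \<Rightarrow> real \<Rightarrow> real \<Rightarrow> real" where
  "FA mu n \<theta> t = measure (sample n \<theta>) {y \<in> space (sample n \<theta>). sqrt (real n) * (thetaA mu n y - \<theta>) \<le> t}"

text \<open>P_{n,theta}(|Fhat_n(t) - F_{A,n,theta}(t)| > eps), for a (randomized) estimator
  Fhat n y r, where r is an independent randomization with law R n.\<close>
definition err_prob :: "(nat \<Rightarrow> real) \<Rightarrow> (nat \<Rightarrow> 'r measure) \<Rightarrow> (nat \<Rightarrow> (nat \<Rightarrow> real) \<Rightarrow> 'r \<Rightarrow> real)
    \<Rightarrow> real \<Rightarrow> nat \<Rightarrow> real \<Rightarrow> real \<Rightarrow> real" where
  "err_prob mu R Fhat t n \<theta> \<epsilon> =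
     measure (sample n \<theta> \<Otimes>\<^sub>M R n)
       {(y, r) \<in> space (sample n \<theta> \<Otimes>\<^sub>M R n). \<bar>Fhat n y r - FA mu n \<theta> t\<bar> > \<epsilon>}"

end

theory Submission
  imports Defs
begin


lemma psf_normal: "product_sigma_finite (\<lambda>_::nat. density lborel (normal_density \<theta> 1))"
  unfolding product_sigma_finite_def
  by (simp add: prob_space_normal_density prob_space_imp_sigma_finite)

lemma psf_lborel: "product_sigma_finite (\<lambda>_::nat. lborel::real measure)"
  unfolding product_sigma_finite_def by (simp add: lborel.sigma_finite_measure_axioms)

lemma sample_density:
  "sample n \<theta> = density (PiM {..<n} (\<lambda>_. lborel)) (\<lambda>x. \<Prod>i<n. normal_density \<theta> 1 (x i))"
proof -
  interpret P: product_sigma_finite "\<lambda>_::nat. density lborel (normal_density \<theta> 1)"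
    by (rule psf_normal)
  interpret L: product_sigma_finite "\<lambda>_::nat. lborel::real measure"
    by (rule psf_lborel)
  have "density (PiM {..<n} (\<lambda>_. lborel)) (\<lambda>x. \<Prod>i<n. normal_density \<theta> 1 (x i))
      = PiM {..<n} (\<lambda>_. density lborel (normal_density \<theta> 1))"
  proof (rule P.PiM_eqI)
    show "sets (density (PiM {..<n} (\<lambda>_. lborel)) (\<lambda>x. \<Prod>i<n. normal_density \<theta> 1 (x i))) =
      sets (PiM {..<n} (\<lambda>_. density lborel (normal_density \<theta> 1)))"
      unfolding sets_density by (rule sets_PiM_cong) auto
  next
    fix A assume A: "\<And>i. i \<in> {..<n} \<Longrightarrow> A i \<in> sets (density lborel (normal_density \<theta> 1))"
    then have A': "\<And>i. i \<in> {..<n} \<Longrightarrow> A i \<in> sets borel" by simp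
    have PA: "Pi\<^sub>E {..<n} A \<in> sets (PiM {..<n} (\<lambda>_. lborel))"
      using A' by (intro sets_PiM_I_finite) auto
    have "emeasure (density (PiM {..<n} (\<lambda>_. lborel)) (\<lambda>x. \<Prod>i<n. normal_density \<theta> 1 (x i))) (Pi\<^sub>E {..<n} A)
       = (\<integral>\<^sup>+ x. ennreal (\<Prod>i<n. normal_density \<theta> 1 (x i)) * indicator (Pi\<^sub>E {..<n} A) x \<partial>PiM {..<n} (\<lambda>_. lborel))"
      using PA by (subst emeasure_density) auto
    also have "\<dots> = (\<integral>\<^sup>+ x. (\<Prod>i<n. ennreal (normal_density \<theta> 1 (x i)) * indicator (A i) (x i)) \<partial>PiM {..<n} (\<lambda>_. lborel))"
    proof (rule nn_integral_cong)
      fix x assume x: "x \<in> space (PiM {..<n} (\<lambda>_. lborel::real measure))"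
      have "indicator (Pi\<^sub>E {..<n} A) x = (\<Prod>i<n. indicator (A i) (x i) :: ennreal)"
      proof (cases "x \<in> Pi\<^sub>E {..<n} A")
        case True then show ?thesis by (auto simp: indicator_def PiE_iff)
      next
        case False
        then obtain j where j: "j < n" "x j \<notin> A j" using x by (auto simp: space_PiM PiE_iff)
        then have "(\<Prod>i<n. indicator (A i) (x i) :: ennreal) = 0"
          using j by (intro prod_zero) (auto intro!: bexI[of _ j])
        then show ?thesis using False by simp
      qed
      then show "ennreal (\<Prod>i<n. normal_density \<theta> 1 (x i)) * indicator (Pi\<^sub>E {..<n} A) x
          = (\<Prod>i<n. ennreal (normal_density \<theta> 1 (x i)) * indicator (A i) (x i))"
        by (simp add: prod_ennreal prod.distrib)
    qed
    also have "\<dots> = (\<Prod>i<n. \<integral>\<^sup>+ y. ennreal (normal_density \<theta> 1 y) * indicator (A i) y \<partial>lborel)"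
      using A' by (intro L.product_nn_integral_prod) auto
    also have "\<dots> = (\<Prod>i<n. emeasure (density lborel (normal_density \<theta> 1)) (A i))"
      using A' by (intro prod.cong refl, subst emeasure_density) auto
    finally show "emeasure (density (PiM {..<n} (\<lambda>_. lborel)) (\<lambda>x. \<Prod>i<n. normal_density \<theta> 1 (x i))) (Pi\<^sub>E {..<n} A)
       = (\<Prod>i\<in>{..<n}. emeasure (density lborel (normal_density \<theta> 1)) (A i))" by simp
  qed simp
  then show ?thesis unfolding sample_def by simp
qed



definition Lr :: "nat \<Rightarrow> real \<Rightarrow> (nat \<Rightarrow> real) \<Rightarrow> real" where
  "Lr n \<theta> y = (\<Prod>i<n. exp (\<theta> * y i - \<theta>\<^sup>2 / 2))"

lemma Lr_meas[measurable]: "Lr n \<theta> \<in> borel_measurable (PiM {..<n} (\<lambda>_. lborel))"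
  unfolding Lr_def by measurable

lemma Lr_pos: "Lr n \<theta> y > 0" unfolding Lr_def by (intro prod_pos) auto

lemma nd_shift: "normal_density \<theta> 1 x = std_normal_density x * exp (\<theta> * x - \<theta>\<^sup>2 / 2)"
  unfolding normal_density_def
  apply (simp add: exp_add[symmetric] power2_eq_square algebra_simps)
  apply (simp add: field_simps)
  done

lemma nd_sq: "std_normal_density x * (exp (\<theta> * x - \<theta>\<^sup>2 / 2))\<^sup>2 = exp (\<theta>\<^sup>2) * normal_density (2*\<theta>) 1 x"
  unfolding normal_density_def
  apply (simp add: exp_add[symmetric] power2_eq_square algebra_simps exp_double[symmetric])
  apply (simp add: field_simps)
  done

lemma nn_integral_sample:
  assumes h: "h \<in> borel_measurable (PiM {..<n} (\<lambda>_. lborel))"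
  shows "(\<integral>\<^sup>+ y. h y \<partial>sample n \<theta>) = (\<integral>\<^sup>+ y. ennreal (Lr n \<theta> y) * h y \<partial>sample n 0)"
proof -
  have "(\<integral>\<^sup>+ y. h y \<partial>sample n \<theta>) =
     (\<integral>\<^sup>+ y. ennreal (\<Prod>i<n. normal_density \<theta> 1 (y i)) * h y \<partial>PiM {..<n} (\<lambda>_. lborel))"
    unfolding sample_density using h by (subst nn_integral_density) auto
  also have "\<dots> = (\<integral>\<^sup>+ y. ennreal (\<Prod>i<n. normal_density 0 1 (y i)) * (ennreal (Lr n \<theta> y) * h y) \<partial>PiM {..<n} (\<lambda>_. lborel))"
    by (intro nn_integral_cong) (simp add: Lr_def nd_shift[of \<theta>] prod.distrib ennreal_mult prod_nonneg mult.assoc)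
  also have "\<dots> = (\<integral>\<^sup>+ y. ennreal (Lr n \<theta> y) * h y \<partial>sample n 0)"
    unfolding sample_density using h by (subst nn_integral_density) auto
  finally show ?thesis .
qed

lemma nn_integral_nd: "(\<integral>\<^sup>+ x. ennreal (normal_density \<mu> 1 x) \<partial>lborel) = 1"
  by (subst nn_integral_eq_integral) auto

lemma Lr_sq:
  "(\<integral>\<^sup>+ y. ennreal ((Lr n \<theta> y)\<^sup>2) \<partial>sample n 0) = ennreal (exp (real n * \<theta>\<^sup>2))"
proof -
  interpret L: product_sigma_finite "\<lambda>_::nat. lborel::real measure"
    by (rule psf_lborel)
  have "(\<integral>\<^sup>+ y. ennreal ((Lr n \<theta> y)\<^sup>2) \<partial>sample n 0) =
     (\<integral>\<^sup>+ y. ennreal (\<Prod>i<n. normal_density 0 1 (y i)) * ennreal ((Lr n \<theta> y)\<^sup>2) \<partial>PiM {..<n} (\<lambda>_. lborel))"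
    unfolding sample_density by (subst nn_integral_density) auto
  also have "\<dots> = (\<integral>\<^sup>+ y. (\<Prod>i<n. ennreal (exp (\<theta>\<^sup>2) * normal_density (2*\<theta>) 1 (y i))) \<partial>PiM {..<n} (\<lambda>_. lborel))"
    by (intro nn_integral_cong)
       (simp add: Lr_def prod_power_distrib nd_sq[symmetric] prod.distrib ennreal_mult'[symmetric] prod_nonneg prod_ennreal)
  also have "\<dots> = (\<Prod>i<n. \<integral>\<^sup>+ x. ennreal (exp (\<theta>\<^sup>2) * normal_density (2*\<theta>) 1 x) \<partial>lborel)"
    by (intro L.product_nn_integral_prod) auto
  also have "\<dots> = (\<Prod>i<n. ennreal (exp (\<theta>\<^sup>2)))"
    by (simp add: ennreal_mult nn_integral_cmult nn_integral_nd)
  also have "\<dots> = ennreal (exp (real n * \<theta>\<^sup>2))"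
    by (simp add: ennreal_power exp_of_nat_mult)
  finally show ?thesis .
qed



lemma prob_sample: "prob_space (sample n \<theta>)"
  unfolding sample_def by (intro prob_space_PiM) (simp add: prob_space_normal_density)

lemma sets_sample: "sets (sample n \<theta>) = sets (PiM {..<n} (\<lambda>_. lborel))"
  unfolding sample_def by (rule sets_PiM_cong) auto

lemma space_sample: "space (sample n \<theta>) = space (PiM {..<n} (\<lambda>_. lborel))"
  using sets_sample sets_eq_imp_space_eq by blast

lemma sets_joint: "sets (sample n \<theta> \<Otimes>\<^sub>M Q) = sets (PiM {..<n} (\<lambda>_. lborel) \<Otimes>\<^sub>M Q)"
  by (rule sets_pair_measure_cong) (auto simp: sets_sample)

lemma prob_joint: "prob_space Q \<Longrightarrow> prob_space (sample n \<theta> \<Otimes>\<^sub>M Q)"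
  by (intro prob_space_pair prob_sample)

lemma contig_bound:
  assumes Q: "prob_space Q" and A: "A \<in> sets (PiM {..<n} (\<lambda>_. lborel) \<Otimes>\<^sub>M Q)" and K: "K > 0"
  shows "measure (sample n \<theta> \<Otimes>\<^sub>M Q) A \<le> K * measure (sample n 0 \<Otimes>\<^sub>M Q) A + exp (real n * \<theta>\<^sup>2) / K"
proof -
  interpret Q: prob_space Q by (rule Q)
  interpret J1: prob_space "sample n \<theta> \<Otimes>\<^sub>M Q" by (rule prob_joint[OF Q])
  define g where "g y = emeasure Q (Pair y -` A)" for y
  have Aj: "A \<in> sets (sample n t \<Otimes>\<^sub>M Q)" for t using A sets_joint by blast
  have gm: "g \<in> borel_measurable (PiM {..<n} (\<lambda>_. lborel))"
    unfolding g_def using Q.measurable_emeasure_Pair[OF A] .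
  have g1: "g y \<le> 1" for y unfolding g_def by (rule Q.emeasure_le_1)
  have "emeasure (sample n \<theta> \<Otimes>\<^sub>M Q) A = (\<integral>\<^sup>+ y. g y \<partial>sample n \<theta>)"
    unfolding g_def by (rule Q.emeasure_pair_measure_alt[OF Aj])
  also have "\<dots> = (\<integral>\<^sup>+ y. ennreal (Lr n \<theta> y) * g y \<partial>sample n 0)"
    by (rule nn_integral_sample[OF gm])
  also have "\<dots> \<le> (\<integral>\<^sup>+ y. ennreal K * g y + ennreal (1/K) * ennreal ((Lr n \<theta> y)\<^sup>2) \<partial>sample n 0)"
  proof (rule nn_integral_mono)
    fix y
    show "ennreal (Lr n \<theta> y) * g y \<le> ennreal K * g y + ennreal (1/K) * ennreal ((Lr n \<theta> y)\<^sup>2)"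
    proof (cases "Lr n \<theta> y \<le> K")
      case True
      then have "ennreal (Lr n \<theta> y) * g y \<le> ennreal K * g y"
        by (intro mult_right_mono ennreal_leI) auto
      then show ?thesis by (rule order_trans) simp
    next
      case False
      have "ennreal (Lr n \<theta> y) * g y \<le> ennreal (Lr n \<theta> y) * 1"
        by (intro mult_left_mono g1) auto
      also have "\<dots> \<le> ennreal (1/K) * ennreal ((Lr n \<theta> y)\<^sup>2)"
      proof -
        have "Lr n \<theta> y \<le> (1/K) * (Lr n \<theta> y)\<^sup>2"
          using False K by (simp add: power2_eq_square field_simps)
        then show ?thesis using K by (simp add: ennreal_mult[symmetric])
      qed
      finally show ?thesis by (rule order_trans) simp
    qed
  qed
  also have "\<dots> = ennreal K * (\<integral>\<^sup>+ y. g y \<partial>sample n 0) + ennreal (1/K) * (\<integral>\<^sup>+ y. ennreal ((Lr n \<theta> y)\<^sup>2) \<partial>sample n 0)"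
    using gm by (subst nn_integral_add) (auto simp: nn_integral_cmult measurable_cong_sets[OF sets_sample refl])
  also have "\<dots> = ennreal K * emeasure (sample n 0 \<Otimes>\<^sub>M Q) A + ennreal (1/K) * ennreal (exp (real n * \<theta>\<^sup>2))"
    unfolding g_def Lr_sq by (simp add: Q.emeasure_pair_measure_alt[OF Aj])
  also have "\<dots> = ennreal (K * measure (sample n 0 \<Otimes>\<^sub>M Q) A + exp (real n * \<theta>\<^sup>2) / K)"
  proof -
    interpret J: prob_space "sample n 0 \<Otimes>\<^sub>M Q" by (rule prob_joint[OF Q])
    show ?thesis using K by (simp add: J.emeasure_eq_measure ennreal_mult[symmetric] ennreal_plus[symmetric] del: ennreal_plus)
  qed
  finally have "emeasure (sample n \<theta> \<Otimes>\<^sub>M Q) A \<le> ennreal (K * measure (sample n 0 \<Otimes>\<^sub>M Q) A + exp (real n * \<theta>\<^sup>2) / K)" .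
  then show ?thesis
    using K by (subst (asm) J1.emeasure_eq_measure) (simp add: ennreal_plus[symmetric] ennreal_le_iff del: ennreal_plus)
qed



lemma sample_component:
  assumes i: "i < n"
  shows "distributed (sample n \<theta>) lborel (\<lambda>y. y i) (normal_density \<theta> 1)"
proof -
  have "distr (sample n \<theta>) lborel (\<lambda>y. y i) = distr (sample n \<theta>) (density lborel (normal_density \<theta> 1)) (\<lambda>y. y i)"
    by (rule distr_cong) auto
  also have "\<dots> = density lborel (normal_density \<theta> 1)"
    unfolding sample_def using i by (intro distr_PiM_component) (auto simp: prob_space_normal_density)
  moreover have "(\<lambda>y. y i) \<in> PiM {..<n} (\<lambda>_. lborel) \<rightarrow>\<^sub>M lborel"
    by (rule measurable_component_singleton) (use i in auto)
  ultimately show ?thesis unfolding distributed_def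
    by (auto simp: measurable_cong_sets[OF sets_sample refl])
qed

lemma sample_indep: "n > 0 \<Longrightarrow> prob_space.indep_vars (sample n \<theta>) (\<lambda>_. borel) (\<lambda>i y. y i) {..<n}"
proof -
  assume n: "n > 0"
  interpret prob_space "sample n \<theta>" by (rule prob_sample)
  have rv: "random_variable borel (\<lambda>y. y i)" if "i \<in> {..<n}" for i
    using that by (simp add: measurable_cong_sets[OF sets_sample refl])
  have "distr (sample n \<theta>) (PiM {..<n} (\<lambda>_. borel)) (\<lambda>x. \<lambda>i\<in>{..<n}. x i)
      = distr (sample n \<theta>) (PiM {..<n} (\<lambda>_. borel)) (\<lambda>x. x)"
    by (rule distr_cong) (auto simp: space_sample space_PiM PiE_def extensional_def fun_eq_iff)
  also have "\<dots> = sample n \<theta>"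
    by (rule distr_id2) (unfold sets_sample, rule sets_PiM_cong, auto)
  also have "\<dots> = PiM {..<n} (\<lambda>i. distr (sample n \<theta>) borel (\<lambda>y. y i))"
  proof -
    have "distr (sample n \<theta>) borel (\<lambda>y. y i) = density lborel (normal_density \<theta> 1)" if "i < n" for i
    proof -
      have "distr (sample n \<theta>) borel (\<lambda>y. y i) = distr (sample n \<theta>) lborel (\<lambda>y. y i)"
        by (rule distr_cong) auto
      then show ?thesis using sample_component[OF that] unfolding distributed_def by simp
    qed
    then show ?thesis unfolding sample_def by (intro PiM_cong) auto
  qed
  finally show ?thesis using n
    by (subst indep_vars_iff_distr_eq_PiM'[OF _ rv]) auto
qed

lemma ybar_cdf:
  assumes n: "n > 0"
  shows "measure (sample n \<theta>) {y \<in> space (sample n \<theta>). ybar n y \<le> x} = Phi (sqrt (real n) * (x - \<theta>))"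
proof -
  interpret prob_space "sample n \<theta>" by (rule prob_sample)
  have "distributed (sample n \<theta>) lborel (\<lambda>y. \<Sum>i\<in>{..<n}. y i)
      (normal_density (\<Sum>i\<in>{..<n}. \<theta>) (sqrt (\<Sum>i\<in>{..<n}. 1\<^sup>2)))"
    using n by (intro sum_indep_normal sample_indep sample_component) auto
  then have d: "distributed (sample n \<theta>) lborel (\<lambda>y. \<Sum>i<n. y i) (normal_density (real n * \<theta>) (sqrt (real n)))"
    by simp
  have d2: "distributed (sample n \<theta>) lborel (\<lambda>y. ((\<Sum>i<n. y i) - real n * \<theta>) / sqrt (real n)) std_normal_density"
    using d n by (subst (asm) normal_standard_normal_convert) auto
  define Y where "Y y = ((\<Sum>i<n. y i) - real n * \<theta>) / sqrt (real n)" for y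
  have eqset: "{y \<in> space (sample n \<theta>). ybar n y \<le> x} = Y -` {..sqrt (real n) * (x - \<theta>)} \<inter> space (sample n \<theta>)"
  proof -
    have "ybar n y \<le> x \<longleftrightarrow> Y y \<le> sqrt (real n) * (x - \<theta>)" for y
    proof -
      have sn: "sqrt (real n) > 0" using n by simp
      have "Y y \<le> sqrt (real n) * (x - \<theta>) \<longleftrightarrow> (\<Sum>i<n. y i) - real n * \<theta> \<le> sqrt (real n) * sqrt (real n) * (x - \<theta>)"
        unfolding Y_def using sn by (simp add: pos_divide_le_eq mult.commute mult.left_commute)
      also have "\<dots> \<longleftrightarrow> (\<Sum>i<n. y i) \<le> real n * x"
        by (simp add: algebra_simps)
      also have "\<dots> \<longleftrightarrow> ybar n y \<le> x"
        unfolding ybar_def using n by (simp add: pos_divide_le_eq mult.commute)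
      finally show ?thesis by simp
    qed
    then show ?thesis by auto
  qed
  have "measure (sample n \<theta>) (Y -` {..sqrt (real n) * (x - \<theta>)} \<inter> space (sample n \<theta>))
      = measure (distr (sample n \<theta>) lborel Y) {..sqrt (real n) * (x - \<theta>)}"
    using d2 unfolding Y_def[abs_def] distributed_def by (subst measure_distr) auto
  also have "\<dots> = Phi (sqrt (real n) * (x - \<theta>))"
    using d2 unfolding Y_def[abs_def] distributed_def Phi_def by simp
  finally show ?thesis using eqset by simp
qed



lemma aux_neg: fixes b m :: real assumes "b < -m" "m > 0" shows "b - m\<^sup>2 / b \<le> 0"
proof -
  have b: "b < 0" using assms by simp
  have "m\<^sup>2 \<le> (-b)\<^sup>2" using assms by (intro power_mono) auto
  then have "m\<^sup>2 \<le> b\<^sup>2" by simp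
  then have "b - m\<^sup>2 / b = (b\<^sup>2 - m\<^sup>2) / b" using b by (simp add: field_simps power2_eq_square)
  also have "\<dots> \<le> 0" using b \<open>m\<^sup>2 \<le> b\<^sup>2\<close> by (intro divide_nonneg_neg) auto
  finally show ?thesis .
qed

lemma aux_pos: fixes b m :: real assumes "b > m" "m > 0" shows "b - m\<^sup>2 / b > 0"
proof -
  have b: "b > 0" using assms by simp
  have "m\<^sup>2 < b\<^sup>2" using assms by (intro power_strict_mono) auto
  then have "b - m\<^sup>2 / b = (b\<^sup>2 - m\<^sup>2) / b" using b by (simp add: field_simps power2_eq_square)
  also have "\<dots> > 0" using b \<open>m\<^sup>2 < b\<^sup>2\<close> by (intro divide_pos_pos) auto
  finally show ?thesis .
qed

lemma FA_set_meas:
  "{y \<in> space (sample n \<theta>). sqrt (real n) * (thetaA mu n y - \<theta>) \<le> t} \<in> sets (sample n \<theta>)"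
  unfolding sets_sample space_sample thetaA_def ybar_def by measurable

lemma ybar_set_meas:
  "{y \<in> space (sample n \<theta>). ybar n y \<le> x} \<in> sets (sample n \<theta>)"
  unfolding sets_sample space_sample ybar_def by measurable

lemma FA_lower:
  assumes n: "n > 0" and mu: "mu n > 0" and tt: "t + sqrt (real n) * \<theta> \<ge> 0"
  shows "FA mu n \<theta> t \<ge> Phi (sqrt (real n) * (mu n - \<theta>))"
proof -
  interpret prob_space "sample n \<theta>" by (rule prob_sample)
  have sub: "{y \<in> space (sample n \<theta>). ybar n y \<le> mu n} \<subseteq> {y \<in> space (sample n \<theta>). sqrt (real n) * (thetaA mu n y - \<theta>) \<le> t}"
  proof safe
    fix y assume y: "y \<in> space (sample n \<theta>)" "ybar n y \<le> mu n"
    have "thetaA mu n y \<le> 0"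
    proof (cases "\<bar>ybar n y\<bar> \<le> mu n")
      case True then show ?thesis by (simp add: thetaA_def)
    next
      case False then have "ybar n y < - mu n" using y by auto
      then show ?thesis using False aux_neg[OF _ mu] by (simp add: thetaA_def)
    qed
    then have "sqrt (real n) * thetaA mu n y \<le> 0" by (simp add: mult_nonneg_nonpos)
    then show "sqrt (real n) * (thetaA mu n y - \<theta>) \<le> t" using tt by (simp add: algebra_simps)
  qed
  have "Phi (sqrt (real n) * (mu n - \<theta>)) = measure (sample n \<theta>) {y \<in> space (sample n \<theta>). ybar n y \<le> mu n}"
    using ybar_cdf[OF n] by simp
  also have "\<dots> \<le> FA mu n \<theta> t"
    unfolding FA_def using sub FA_set_meas by (intro finite_measure_mono) auto
  finally show ?thesis .
qed

lemma FA_upper: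
  assumes n: "n > 0" and mu: "mu n > 0" and tt: "t + sqrt (real n) * \<theta> < 0"
  shows "FA mu n \<theta> t \<le> Phi (sqrt (real n) * (- mu n - \<theta>))"
proof -
  interpret prob_space "sample n \<theta>" by (rule prob_sample)
  have sub: "{y \<in> space (sample n \<theta>). sqrt (real n) * (thetaA mu n y - \<theta>) \<le> t} \<subseteq> {y \<in> space (sample n \<theta>). ybar n y \<le> - mu n}"
  proof safe
    fix y assume y: "y \<in> space (sample n \<theta>)" "sqrt (real n) * (thetaA mu n y - \<theta>) \<le> t"
    have "sqrt (real n) * thetaA mu n y < 0" using y(2) tt by (simp add: algebra_simps)
    then have neg: "thetaA mu n y < 0" using n by (simp add: mult_less_0_iff)
    then have nz: "\<not> \<bar>ybar n y\<bar> \<le> mu n" by (auto simp: thetaA_def)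
    show "ybar n y \<le> - mu n"
    proof (rule ccontr)
      assume "\<not> ybar n y \<le> - mu n"
      then have "ybar n y > mu n" using nz by auto
      then have "thetaA mu n y > 0" using aux_pos[OF _ mu] nz by (simp add: thetaA_def)
      then show False using neg by simp
    qed
  qed
  have "FA mu n \<theta> t \<le> measure (sample n \<theta>) {y \<in> space (sample n \<theta>). ybar n y \<le> - mu n}"
    unfolding FA_def using sub ybar_set_meas by (intro finite_measure_mono) auto
  also have "\<dots> = Phi (sqrt (real n) * (- mu n - \<theta>))"
    using ybar_cdf[OF n] by simp
  finally show ?thesis .
qed



lemma Phi_cdf: "Phi = cdf std_normal_distribution"
  by (simp add: fun_eq_iff Phi_def cdf_def)

lemma Phi_mono: "x \<le> y \<Longrightarrow> Phi x \<le> Phi y"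
proof -
  assume "x \<le> y"
  interpret real_distribution std_normal_distribution by (rule real_dist_normal_dist)
  show ?thesis unfolding Phi_cdf using cdf_nondecreasing \<open>x \<le> y\<close> by blast
qed

lemma Phi_cont: "isCont Phi x"
proof -
  interpret real_distribution std_normal_distribution by (rule real_dist_normal_dist)
  have "emeasure std_normal_distribution {x} = 0"
    by (subst emeasure_density) auto
  then have "measure std_normal_distribution {x} = 0" by (simp add: measure_def)
  then show ?thesis unfolding Phi_cdf using isCont_cdf by blast
qed

lemma Phi_top: "(Phi \<longlongrightarrow> 1) at_top"
  unfolding Phi_cdf using real_distribution.cdf_lim_at_top_prob[OF real_dist_normal_dist] .

lemma Phi_bot: "(Phi \<longlongrightarrow> 0) at_bot"
proof -
  interpret real_distribution std_normal_distribution by (rule real_dist_normal_dist)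
  show ?thesis unfolding Phi_cdf using cdf_lim_at_bot .
qed

lemma err_set_meas:
  fixes f :: "(nat \<Rightarrow> real) \<Rightarrow> 'q \<Rightarrow> real"
  assumes fm: "(\<lambda>(y, r). f y r) \<in> borel_measurable (PiM {..<n} (\<lambda>_. lborel) \<Otimes>\<^sub>M Q)"
  shows "{(y, r) \<in> space (sample n \<theta> \<Otimes>\<^sub>M Q). a < \<bar>f y r - b\<bar>} \<in> sets (PiM {..<n} (\<lambda>_. lborel) \<Otimes>\<^sub>M Q)"
proof -
  have sp: "space (sample n \<theta> \<Otimes>\<^sub>M Q) = space (PiM {..<n} (\<lambda>_. lborel) \<Otimes>\<^sub>M Q)"
    by (rule sets_eq_imp_space_eq[OF sets_joint])
  have gm: "(\<lambda>p. \<bar>(case p of (y, r) \<Rightarrow> f y r) - b\<bar>) \<in> borel_measurable (PiM {..<n} (\<lambda>_. lborel) \<Otimes>\<^sub>M Q)"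
    using borel_measurable_abs[OF borel_measurable_diff[OF fm borel_measurable_const[of b]]] by simp
  have "(\<lambda>p. \<bar>(case p of (y, r) \<Rightarrow> f y r) - b\<bar>) -` {a<..} \<inter> space (PiM {..<n} (\<lambda>_. lborel) \<Otimes>\<^sub>M Q) \<in> sets (PiM {..<n} (\<lambda>_. lborel) \<Otimes>\<^sub>M Q)"
    by (rule measurable_sets[OF gm]) auto
  moreover have "{(y, r) \<in> space (sample n \<theta> \<Otimes>\<^sub>M Q). a < \<bar>f y r - b\<bar>} =
     (\<lambda>p. \<bar>(case p of (y, r) \<Rightarrow> f y r) - b\<bar>) -` {a<..} \<inter> space (PiM {..<n} (\<lambda>_. lborel) \<Otimes>\<^sub>M Q)"
    unfolding sp by auto
  ultimately show ?thesis by simp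
qed

lemma lower_one:
  fixes f :: "(nat \<Rightarrow> real) \<Rightarrow> 'q \<Rightarrow> real"
  assumes Q: "prob_space Q"
    and fm: "(\<lambda>(y, r). f y r) \<in> borel_measurable (PiM {..<n} (\<lambda>_. lborel) \<Otimes>\<^sub>M Q)"
    and K: "K > 0" and ab: "\<epsilon> + \<eta> < \<bar>a - b\<bar>"
  shows "measure (sample n \<theta> \<Otimes>\<^sub>M Q) {(y, r) \<in> space (sample n \<theta> \<Otimes>\<^sub>M Q). \<epsilon> < \<bar>f y r - a\<bar>}
    \<ge> 1 - (K * measure (sample n 0 \<Otimes>\<^sub>M Q) {(y, r) \<in> space (sample n 0 \<Otimes>\<^sub>M Q). \<eta> < \<bar>f y r - b\<bar>} + exp (real n * \<theta>\<^sup>2) / K)"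
proof -
  interpret J: prob_space "sample n \<theta> \<Otimes>\<^sub>M Q" by (rule prob_joint[OF Q])
  have sp: "space (sample n t \<Otimes>\<^sub>M Q) = space (PiM {..<n} (\<lambda>_. lborel) \<Otimes>\<^sub>M Q)" for t
    by (rule sets_eq_imp_space_eq[OF sets_joint])
  define A where "A = {(y, r) \<in> space (sample n 0 \<Otimes>\<^sub>M Q). \<eta> < \<bar>f y r - b\<bar>}"
  define E where "E = {(y, r) \<in> space (sample n \<theta> \<Otimes>\<^sub>M Q). \<epsilon> < \<bar>f y r - a\<bar>}"
  have A: "A \<in> sets (PiM {..<n} (\<lambda>_. lborel) \<Otimes>\<^sub>M Q)" unfolding A_def by (rule err_set_meas[OF fm])
  have E: "E \<in> sets (PiM {..<n} (\<lambda>_. lborel) \<Otimes>\<^sub>M Q)" unfolding E_def by (rule err_set_meas[OF fm])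
  have Aj: "A \<in> sets (sample n \<theta> \<Otimes>\<^sub>M Q)" using A sets_joint by blast
  have Ej: "E \<in> sets (sample n \<theta> \<Otimes>\<^sub>M Q)" using E sets_joint by blast
  have sub: "space (sample n \<theta> \<Otimes>\<^sub>M Q) - A \<subseteq> E"
  proof
    fix p assume p: "p \<in> space (sample n \<theta> \<Otimes>\<^sub>M Q) - A"
    obtain y r where pyr: "p = (y, r)" by force
    have "\<bar>f y r - b\<bar> \<le> \<eta>" using p unfolding A_def pyr sp by (auto simp: not_less)
    then have "\<epsilon> < \<bar>f y r - a\<bar>" using ab by linarith
    then show "p \<in> E" using p unfolding E_def pyr by auto
  qed
  have "1 - measure (sample n \<theta> \<Otimes>\<^sub>M Q) A = measure (sample n \<theta> \<Otimes>\<^sub>M Q) (space (sample n \<theta> \<Otimes>\<^sub>M Q) - A)"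
    using J.prob_compl[OF Aj] by simp
  also have "\<dots> \<le> measure (sample n \<theta> \<Otimes>\<^sub>M Q) E"
    using sub Ej by (intro J.finite_measure_mono) auto
  finally have "1 - measure (sample n \<theta> \<Otimes>\<^sub>M Q) A \<le> measure (sample n \<theta> \<Otimes>\<^sub>M Q) E" .
  moreover have "measure (sample n \<theta> \<Otimes>\<^sub>M Q) A \<le> K * measure (sample n 0 \<Otimes>\<^sub>M Q) A + exp (real n * \<theta>\<^sup>2) / K"
    by (rule contig_bound[OF Q A K])
  ultimately show ?thesis unfolding A_def E_def by linarith
qed



lemma choose_params:
  fixes m :: ereal
  assumes m: "m > 0" and eps: "\<epsilon> < (Phi_ext (ereal t + m) - Phi_ext (ereal t - m)) / 2" and c: "c > \<bar>t\<bar>"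
  shows "\<exists>\<delta> M'. \<delta> > 0 \<and> \<delta> < c - \<bar>t\<bar> \<and> ereal M' < m \<and> 2 * \<epsilon> < Phi (t + M' - \<delta>) - Phi (t - M' + \<delta>)"
proof (cases m)
  case (real m0)
  then have m0: "m0 > 0" using m by simp
  have J: "2 * \<epsilon> < Phi (t + m0) - Phi (t - m0)" using eps real by simp
  have lim: "((\<lambda>s. Phi (t + m0 - 2 * s) - Phi (t - m0 + 2 * s)) \<longlongrightarrow> Phi (t + m0) - Phi (t - m0)) (at_right 0)"
  proof (intro tendsto_diff)
    have "((\<lambda>s::real. t + m0 - 2 * s) \<longlongrightarrow> t + m0) (at_right 0)"
      by (auto intro!: tendsto_eq_intros)
    then show "((\<lambda>s. Phi (t + m0 - 2 * s)) \<longlongrightarrow> Phi (t + m0)) (at_right 0)"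
      by (rule isCont_tendsto_compose[OF Phi_cont])
    have "((\<lambda>s::real. t - m0 + 2 * s) \<longlongrightarrow> t - m0) (at_right 0)"
      by (auto intro!: tendsto_eq_intros)
    then show "((\<lambda>s. Phi (t - m0 + 2 * s)) \<longlongrightarrow> Phi (t - m0)) (at_right 0)"
      by (rule isCont_tendsto_compose[OF Phi_cont])
  qed
  have ev: "eventually (\<lambda>s. 2 * \<epsilon> < Phi (t + m0 - 2 * s) - Phi (t - m0 + 2 * s)) (at_right 0)"
    using order_tendstoD(1)[OF lim J] .
  then obtain b where b: "b > 0" "\<And>y. y > 0 \<Longrightarrow> y < b \<Longrightarrow> 2 * \<epsilon> < Phi (t + m0 - 2 * y) - Phi (t - m0 + 2 * y)"
    unfolding eventually_at_right_field by auto
  define s where "s = min b (min (c - \<bar>t\<bar>) m0) / 2"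
  have s: "s > 0" "s < b" "s < c - \<bar>t\<bar>" "s < m0" using b c m0 unfolding s_def by auto
  show ?thesis
  proof (intro exI conjI)
    show "s > 0" "s < c - \<bar>t\<bar>" using s by auto
    show "ereal (m0 - s) < m" using real s by simp
    show "2 * \<epsilon> < Phi (t + (m0 - s) - s) - Phi (t - (m0 - s) + s)"
      using b(2)[OF s(1) s(2)] by (simp add: algebra_simps)
  qed
next
  case PInf
  have P1: "Phi_ext \<infinity> = 1" unfolding infinity_ereal_def by (simp only: Phi_ext.simps)
  have P0: "Phi_ext (- \<infinity>) = 0" unfolding infinity_ereal_def by (simp only: uminus_ereal.simps Phi_ext.simps)
  have "ereal t + m = \<infinity>" "ereal t - m = - \<infinity>" using PInf by simp_all
  then have a: "Phi_ext (ereal t + m) = 1" "Phi_ext (ereal t - m) = 0" by (simp_all only: P1 P0)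
  have "\<epsilon> < (1 - 0) / 2" using eps unfolding a .
  then have J: "2 * \<epsilon> < 1" by simp
  define \<delta> where "\<delta> = (c - \<bar>t\<bar>) / 2"
  have d: "\<delta> > 0" "\<delta> < c - \<bar>t\<bar>" using c unfolding \<delta>_def by auto
  have lim: "((\<lambda>M. Phi (t + M - \<delta>) - Phi (t - M + \<delta>)) \<longlongrightarrow> 1 - 0) at_top"
  proof (intro tendsto_diff)
    have "filterlim (\<lambda>M::real. (t - \<delta>) + M) at_top at_top"
      by (rule filterlim_tendsto_add_at_top[OF tendsto_const filterlim_ident])
    moreover have "(\<lambda>M::real. (t - \<delta>) + M) = (\<lambda>M. t + M - \<delta>)" by (auto simp: fun_eq_iff)
    ultimately have "filterlim (\<lambda>M::real. t + M - \<delta>) at_top at_top" by simp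
    then show "((\<lambda>M. Phi (t + M - \<delta>)) \<longlongrightarrow> 1) at_top" using Phi_top by (rule filterlim_compose[rotated])
    have "filterlim (\<lambda>M::real. (t + \<delta>) + (- M)) at_bot at_top"
      by (subst filterlim_tendsto_add_at_bot_iff[OF tendsto_const]) (rule filterlim_uminus_at_bot_at_top)
    moreover have "(\<lambda>M::real. (t + \<delta>) + (- M)) = (\<lambda>M. t - M + \<delta>)" by (auto simp: fun_eq_iff)
    ultimately have "filterlim (\<lambda>M::real. t - M + \<delta>) at_bot at_top" by simp
    then show "((\<lambda>M. Phi (t - M + \<delta>)) \<longlongrightarrow> 0) at_top" using Phi_bot by (rule filterlim_compose[rotated])
  qed
  have "eventually (\<lambda>M. 2 * \<epsilon> < Phi (t + M - \<delta>) - Phi (t - M + \<delta>)) at_top"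
    using order_tendstoD(1)[OF lim] J by simp
  then obtain M where "2 * \<epsilon> < Phi (t + M - \<delta>) - Phi (t - M + \<delta>)"
    unfolding eventually_at_top_linorder by auto
  then show ?thesis using d PInf by auto
next
  case MInf
  then show ?thesis using m by simp
qed



theorem theorem5:
  fixes mu :: "nat \<Rightarrow> real" and m :: ereal and t :: real
    and R :: "nat \<Rightarrow> 'r measure" and Fhat :: "nat \<Rightarrow> (nat \<Rightarrow> real) \<Rightarrow> 'r \<Rightarrow> real"
  assumes mu_pos: "\<And>n. mu n > 0"
    and mu_lim: "mu \<longlonglongrightarrow> 0"
    and m_lim: "(\<lambda>n. ereal (sqrt (real n) * mu n)) \<longlonglongrightarrow> m"
    and m_nonneg: "0 \<le> m"
    and R_prob: "\<And>n. prob_space (R n)"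
    and Fhat_meas: "\<And>n. (\<lambda>(y, r). Fhat n y r)
          \<in> borel_measurable (PiM {..<n} (\<lambda>_. lborel) \<Otimes>\<^sub>M R n)"
    and consistent: "\<And>\<theta> \<eta>. \<eta> > 0 \<Longrightarrow> (\<lambda>n. err_prob mu R Fhat t n \<theta> \<eta>) \<longlonglongrightarrow> 0"
  shows "\<forall>\<epsilon> c. \<epsilon> < (Phi_ext (ereal t + m) - Phi_ext (ereal t - m)) / 2 \<and> c > \<bar>t\<bar> \<longrightarrow>
           (\<lambda>n. SUP \<theta>\<in>{\<theta>. \<bar>\<theta>\<bar> < c / sqrt (real n)}. err_prob mu R Fhat t n \<theta> \<epsilon>) \<longlonglongrightarrow> 1"
proof -
  {
    fix \<epsilon> c :: real
    assume eps: "\<epsilon> < (Phi_ext (ereal t + m) - Phi_ext (ereal t - m)) / 2" and c: "c > \<bar>t\<bar>"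
    define SUPn where "SUPn n = (SUP \<theta>\<in>{\<theta>. \<bar>\<theta>\<bar> < c / sqrt (real n)}. err_prob mu R Fhat t n \<theta> \<epsilon>)" for n
    have le1: "err_prob mu R Fhat t n \<theta> e \<le> 1" for n \<theta> e
      unfolding err_prob_def using prob_space.prob_le_1[OF prob_joint[OF R_prob]] .
    have bdd: "bdd_above ((\<lambda>\<theta>. err_prob mu R Fhat t n \<theta> \<epsilon>) ` X)" for n X
      by (rule bdd_aboveI2[where M=1]) (rule le1)
    have cpos: "c > 0" using c by linarith
    have zero_in: "0 \<in> {\<theta>. \<bar>\<theta>\<bar> < c / sqrt (real n)}" if "n > 0" for n
      using that cpos by simp
    have SUP_le: "SUPn n \<le> 1" if "n > 0" for n
      unfolding SUPn_def using zero_in[OF that] le1 by (intro cSUP_least) (auto intro!: exI[of _ 0])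
    have SUP_ge: "err_prob mu R Fhat t n \<theta> \<epsilon> \<le> SUPn n" if "\<theta> \<in> {\<theta>. \<bar>\<theta>\<bar> < c / sqrt (real n)}" for n \<theta>
      unfolding SUPn_def using that bdd by (intro cSUP_upper) auto
    have "SUPn \<longlonglongrightarrow> 1"
    proof (cases "\<epsilon> < 0")
      case True
      have "eventually (\<lambda>n. SUPn n = 1) sequentially"
        using eventually_gt_at_top[of "0::nat"]
      proof eventually_elim
        case (elim n)
        interpret J: prob_space "sample n 0 \<Otimes>\<^sub>M R n" by (rule prob_joint[OF R_prob])
        have "{(y, r) \<in> space (sample n 0 \<Otimes>\<^sub>M R n). \<epsilon> < \<bar>Fhat n y r - FA mu n 0 t\<bar>} = space (sample n 0 \<Otimes>\<^sub>M R n)"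
          using True by auto
        then have "err_prob mu R Fhat t n 0 \<epsilon> = 1" unfolding err_prob_def by (simp add: J.prob_space)
        then have "1 \<le> SUPn n" using SUP_ge[OF zero_in[OF elim]] by simp
        then show ?case using SUP_le[OF elim] by simp
      qed
      then show ?thesis by (rule tendsto_eventually)
    next
      case False
      have mpos: "m > 0"
      proof (rule ccontr)
        assume "\<not> m > 0"
        then have "m = 0" using m_nonneg by simp
        then show False using eps False by simp
      qed
      obtain \<delta> M' where d: "\<delta> > 0" "\<delta> < c - \<bar>t\<bar>" "ereal M' < m"
        and kap: "2 * \<epsilon> < Phi (t + M' - \<delta>) - Phi (t - M' + \<delta>)"
        using choose_params[OF mpos eps c] by blast
      define \<kappa> where "\<kappa> = Phi (t + M' - \<delta>) - Phi (t - M' + \<delta>)"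
      define \<eta> where "\<eta> = (\<kappa> - 2 * \<epsilon>) / 4"
      have eta: "\<eta> > 0" using kap unfolding \<eta>_def \<kappa>_def by simp
      have evM: "eventually (\<lambda>n. M' < sqrt (real n) * mu n) sequentially"
        using order_tendstoD(1)[OF m_lim d(3)] by simp
      define p where "p n = err_prob mu R Fhat t n 0 \<eta>" for n
      have p0: "p \<longlonglongrightarrow> 0" unfolding p_def by (rule consistent[OF eta])
      define C where "C = exp ((\<bar>t\<bar> + \<delta>)\<^sup>2)"
      have Cpos: "C > 0" unfolding C_def by simp
      have key: "eventually (\<lambda>n. \<forall>K>0. 1 - (K * p n + C / K) \<le> SUPn n) sequentially"
        using evM eventually_gt_at_top[of "0::nat"]
      proof eventually_elim
        case (elim n)
        have n: "n > 0" using elim by simp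
        have sn: "sqrt (real n) > 0" using n by simp
        define \<theta>1 where "\<theta>1 = (- t - \<delta>) / sqrt (real n)"
        define \<theta>2 where "\<theta>2 = (- t + \<delta>) / sqrt (real n)"
        have s1: "sqrt (real n) * \<theta>1 = - t - \<delta>" unfolding \<theta>1_def using sn by simp
        have s2: "sqrt (real n) * \<theta>2 = - t + \<delta>" unfolding \<theta>2_def using sn by simp
        have "FA mu n \<theta>2 t \<ge> Phi (sqrt (real n) * (mu n - \<theta>2))"
          using FA_lower[of n mu t \<theta>2] n mu_pos[of n] s2 d by simp
        also have "sqrt (real n) * (mu n - \<theta>2) = sqrt (real n) * mu n + t - \<delta>"
          using s2 by (simp add: algebra_simps)
        finally have F2: "FA mu n \<theta>2 t \<ge> Phi (t + M' - \<delta>)"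
          using Phi_mono[of "t + M' - \<delta>" "sqrt (real n) * mu n + t - \<delta>"] elim by linarith
        have "FA mu n \<theta>1 t \<le> Phi (sqrt (real n) * (- mu n - \<theta>1))"
          using FA_upper[of n mu t \<theta>1] n mu_pos[of n] s1 d by simp
        also have "sqrt (real n) * (- mu n - \<theta>1) = - (sqrt (real n) * mu n) + t + \<delta>"
          using s1 by (simp add: algebra_simps)
        finally have F1: "FA mu n \<theta>1 t \<le> Phi (t - M' + \<delta>)"
          using Phi_mono[of "- (sqrt (real n) * mu n) + t + \<delta>" "t - M' + \<delta>"] elim by linarith
        have "FA mu n \<theta>2 t - FA mu n \<theta>1 t \<ge> \<kappa>" using F1 F2 unfolding \<kappa>_def by linarith
        have "\<epsilon> + \<eta> < \<bar>FA mu n \<theta>1 t - FA mu n 0 t\<bar> \<or> \<epsilon> + \<eta> < \<bar>FA mu n \<theta>2 t - FA mu n 0 t\<bar>"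
        proof (rule ccontr)
          assume "\<not> (\<epsilon> + \<eta> < \<bar>FA mu n \<theta>1 t - FA mu n 0 t\<bar> \<or> \<epsilon> + \<eta> < \<bar>FA mu n \<theta>2 t - FA mu n 0 t\<bar>)"
          then have "\<bar>FA mu n \<theta>1 t - FA mu n 0 t\<bar> \<le> \<epsilon> + \<eta>" "\<bar>FA mu n \<theta>2 t - FA mu n 0 t\<bar> \<le> \<epsilon> + \<eta>"
            by auto
          moreover have "\<kappa> = 2 * \<epsilon> + 4 * \<eta>" unfolding \<eta>_def by (simp add: field_simps)
          ultimately show False using \<open>FA mu n \<theta>2 t - FA mu n \<theta>1 t \<ge> \<kappa>\<close> eta
            unfolding abs_le_iff by linarith
        qed
        then obtain \<theta> where th: "\<epsilon> + \<eta> < \<bar>FA mu n \<theta> t - FA mu n 0 t\<bar>"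
          and thin: "\<theta> \<in> {\<theta>. \<bar>\<theta>\<bar> < c / sqrt (real n)}" and thC: "exp (real n * \<theta>\<^sup>2) \<le> C"
        proof -
          have nsq: "real n * x\<^sup>2 = (sqrt (real n) * x)\<^sup>2" for x
            by (simp add: power_mult_distrib)
          have b1: "\<bar>- t - \<delta>\<bar> \<le> \<bar>t\<bar> + \<delta>" "\<bar>- t + \<delta>\<bar> \<le> \<bar>t\<bar> + \<delta>" using d by auto
          have sq1: "(- t - \<delta>)\<^sup>2 \<le> (\<bar>t\<bar> + \<delta>)\<^sup>2" "(- t + \<delta>)\<^sup>2 \<le> (\<bar>t\<bar> + \<delta>)\<^sup>2"
            using b1 by (auto intro!: power2_le_iff_abs_le[THEN iffD2] simp: d(1) add_nonneg_pos less_imp_le)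
          have in1: "\<theta>1 \<in> {\<theta>. \<bar>\<theta>\<bar> < c / sqrt (real n)}" "\<theta>2 \<in> {\<theta>. \<bar>\<theta>\<bar> < c / sqrt (real n)}"
            using b1 d sn unfolding \<theta>1_def \<theta>2_def by (auto simp: abs_div divide_strict_right_mono)
          have e1: "exp (real n * \<theta>1\<^sup>2) \<le> C" "exp (real n * \<theta>2\<^sup>2) \<le> C"
            unfolding C_def nsq s1 s2 using sq1 by auto
          show ?thesis using that in1 e1 \<open>\<epsilon> + \<eta> < _ \<or> _\<close> by blast
        qed
        show ?case
        proof (intro allI impI)
          fix K :: real assume K: "K > 0"
          have "1 - (K * p n + exp (real n * \<theta>\<^sup>2) / K) \<le> err_prob mu R Fhat t n \<theta> \<epsilon>"
            unfolding err_prob_def p_def by (rule lower_one[OF R_prob Fhat_meas K th])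
          moreover have "exp (real n * \<theta>\<^sup>2) / K \<le> C / K" using thC K by (simp add: divide_right_mono)
          ultimately show "1 - (K * p n + C / K) \<le> SUPn n" using SUP_ge[OF thin] by linarith
        qed
      qed
      show ?thesis
      proof (rule tendstoI)
        fix e :: real assume e: "e > 0"
        define K where "K = 4 * C / e"
        have K: "K > 0" unfolding K_def using Cpos e by simp
        have CK: "C / K = e / 4" unfolding K_def using Cpos e by simp
        have "eventually (\<lambda>n. p n < e / (4 * K)) sequentially"
          using order_tendstoD(2)[OF p0] e K by simp
        then show "eventually (\<lambda>n. dist (SUPn n) 1 < e) sequentially"
          using key eventually_gt_at_top[of "0::nat"]
        proof eventually_elim
          case (elim n)
          have "K * p n < e / 4" using elim(1) K by (simp add: field_simps)
          then have "1 - e / 2 < SUPn n" using elim(2) K CK by force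
          moreover have "SUPn n \<le> 1" using SUP_le elim(3) by simp
          ultimately show ?case using e by (simp add: dist_real_def abs_if)
        qed
      qed
    qed
    then have "(\<lambda>n. SUP \<theta>\<in>{\<theta>. \<bar>\<theta>\<bar> < c / sqrt (real n)}. err_prob mu R Fhat t n \<theta> \<epsilon>) \<longlonglongrightarrow> 1"
      unfolding SUPn_def .
  }
  then show ?thesis by blast
qed

end
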